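(* Consider the forward-Euler DG update of cell means $$\bar{\mathbf u}_j^{n+1}=\bar{\mathbf u}_j^{n}-\frac{\Delta t}{\Delta x}\Big(\hat{\mathbf f}(\mathbf u^n_{jQ},\mathbf u^n_{(j+1)1})-\hat{\mathbf f}(\mathbf u^n_{(j-1)Q},\mathbf u^n_{j1})\Big)+\Delta t\sum_{q=1}^Q w_q\Big(-\sigma_a\mathbf u^n_{jq}+\sigma_s\mathbf r(\mathbf u^n_{jq})+\langle\mathbf b\,S(t^n,x_{jq},\cdot)\rangle\Big),$$ where $\hat{\mathbf f}(\mathbf v,\mathbf w)=\tfrac12\big(\mathbf f(\mathbf v)+\mathbf f(\mathbf w)-(\mathbf w-\mathbf v)\big)$ and $\bar{\mathbf u}^n_j=\frac1{\Delta x}\int_{I_j}\mathbf u_j(t^n,x)\,dx$. Assume $\sigma_a,\sigma_s\ge0$ are constants, $\sigma_t:=\sigma_a+\sigma_s$, $S\ge0$, $k\le 2Q-3$, that all point values $\mathbf u^n_{jq}$ ($q=1,\dots,Q$) together with $\mathbf u^n_{(j-1)Q}$ and $\mathbf u^n_{(j+1)1}$ lie in $\mathcal R_{\mathbf b}$, and that the CFL condition $$\frac{\Delta t}{\Delta x}<w_Q\,(1-\sigma_t\Delta t)$$ holds, where $w_Q$ is the last weight of the $Q$-point Gauss–Lobatto rule on $[-1/2,1/2]$. Then $\bar{\mathbf u}^{n+1}_j\in\mathcal R_{\mathbf b}$. The same conclusion holds with $\mathcal R_{\mathbf b}$ replaced by the numerically realizable set $\mathcal R^{\mathcal Q}_{\mathbf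 b}$ when all angular integrals (in $\mathbf f$, $\mathbf r$, $\langle\mathbf bS\rangle$ and the closure) are replaced by the angular quadrature $\mathcal Q$.
   Context: Setting: slab-geometry kinetic equation $\partial_t\psi+\mu\partial_x\psi+\sigma_a\psi=\sigma_s\mathcal C(\psi)+S$, with collision operator $\mathcal C(\psi)(\mu)=\int_{-1}^1T(\mu,\mu')\psi(\mu')d\mu'-\int_{-1}^1T(\mu',\mu)\psi(\mu)d\mu'$, kernel $T>0$ with $\int_{-1}^1T(\mu',\mu)d\mu'\equiv1$. Notation: $\langle\phi\rangle=\int_{-1}^1\phi\,d\mu$; basis $\mathbf b=(b_0,\dots,b_N)^T$ of bounded functions with $b_0\equiv1$; realizable set $\mathcal R_{\mathbf b}=\{\mathbf u:\exists\phi\ge0,\ \langle\phi\rangle>0,\ \mathbf u=\langle\mathbf b\phi\rangle\}$. Angular quadrature $\mathcal Q$: nodes $\mu_i\in[-1,1]$, weights $w_i>0$, $i=1,\dots,n_{\mathcal Q}$; numerically realizable set $\mathcal R^{\mathcal Q}_{\mathbf b}=\{\mathbf u:\exists f_i>0,\ \mathbf u=\sum_i w_i\mathbf b(\mu_i)f_i\}$. Maxwell–Boltzmann entropy closure: for realizable $\mathbf u$ the ansatz $\hat\psi_{\mathbf u}=\exp(\mathbf b^T\hat{\boldsymbol\alpha}(\mathbf u))$ with $\langle\mathbf b\hat\psi_{\mathbf u}\rangle=\mathbf u$ exists; $\mathbf f(\mathbf u)=\langle\mu\mathbf b\hat\psi_{\mathbf u}\rangle$, $\mathbf r(\mathbf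 u)=\langle\mathbf b\,\mathcal C(\hat\psi_{\mathbf u})\rangle$. Spatial discretization: cells $I_j=(x_{j-1/2},x_{j+1/2})$ of width $\Delta x$ with centers $x_j$; on $I_j$ the approximation $\mathbf u_j(t,x)$ is a polynomial in $x$ of degree at most $k$ (expanded in Legendre polynomials scaled to the cell, so the cell mean is the zeroth coefficient). The $Q$-point Gauss–Lobatto rule on $[-1/2,1/2]$ has nodes $-1/2=y_1<\dots<y_Q=1/2$ and positive weights $w_q$ summing to $1$ (with $w_1=w_Q$), exact for polynomials of degree $\le 2Q-3$; $x_{jq}=x_j+y_q\Delta x$ and $\mathbf u^n_{jq}=\mathbf u_j(t^n,x_{jq})$ (so $\mathbf u^n_{j1}$, $\mathbf u^n_{jQ}$ are the values at the left and right cell edges; for boundary cells the neighbor values are given boundary moment vectors). *)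

theory Defs
  imports "HOL-Analysis.Analysis" "HOL-Computational_Algebra.Polynomial"
begin

text \<open>Moment vectors are functions nat => real; only components 0..N matter.
  Basis functions: b l mu (l = 0..N), angular variable mu in [-1,1].\<close>

type_synonym mvec = "nat \<Rightarrow> real"

definition ang :: "(real \<Rightarrow> real) \<Rightarrow> real" where
  "ang \<phi> = set_lebesgue_integral lborel {-1..1::real} \<phi>"

definition angQ :: "nat \<Rightarrow> (nat \<Rightarrow> real) \<Rightarrow> (nat \<Rightarrow> real) \<Rightarrow> (real \<Rightarrow> real) \<Rightarrow> real" where
  "angQ nQ mu wt \<phi> = (\<Sum>i=1..nQ. wt i * \<phi> (mu i))"

definition realizable :: "nat \<Rightarrow> (nat \<Rightarrow> real \<Rightarrow> real) \<Rightarrow> mvec \<Rightarrow> bool" where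
  "realizable N b u \<longleftrightarrow>
     (\<exists>\<phi>. (\<forall>\<mu>\<in>{-1..1}. 0 \<le> \<phi> \<mu>) \<and> set_integrable lborel {-1..1::real} \<phi>
        \<and> (\<forall>l\<le>N. set_integrable lborel {-1..1::real} (\<lambda>\<mu>. b l \<mu> * \<phi> \<mu>))
        \<and> ang \<phi> > 0 \<and> (\<forall>l\<le>N. u l = ang (\<lambda>\<mu>. b l \<mu> * \<phi> \<mu>)))"

definition realizableQ :: "nat \<Rightarrow> (nat \<Rightarrow> real \<Rightarrow> real) \<Rightarrow> nat \<Rightarrow> (nat \<Rightarrow> real) \<Rightarrow> (nat \<Rightarrow> real)
    \<Rightarrow> mvec \<Rightarrow> bool" where
  "realizableQ N b nQ mu wt u \<longleftrightarrow>
     (\<exists>f. (\<forall>i\<in>{1..nQ}. 0 < f i) \<and> (\<forall>l\<le>N. u l = (\<Sum>i=1..nQ. wt i * b l (mu i) * f i)))"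

definition mb_ansatz :: "nat \<Rightarrow> (nat \<Rightarrow> real \<Rightarrow> real) \<Rightarrow> mvec \<Rightarrow> real \<Rightarrow> real" where
  "mb_ansatz N b \<alpha> \<mu> = exp (\<Sum>l\<le>N. \<alpha> l * b l \<mu>)"

definition is_mb_closure :: "((real \<Rightarrow> real) \<Rightarrow> real) \<Rightarrow> (mvec \<Rightarrow> bool) \<Rightarrow> nat
    \<Rightarrow> (nat \<Rightarrow> real \<Rightarrow> real) \<Rightarrow> (mvec \<Rightarrow> mvec) \<Rightarrow> bool" where
  "is_mb_closure A R N b \<alpha> \<longleftrightarrow>
     (\<forall>u. R u \<longrightarrow> (\<forall>l\<le>N. A (\<lambda>\<mu>. b l \<mu> * mb_ansatz N b (\<alpha> u) \<mu>) = u l))"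

definition mflux :: "((real \<Rightarrow> real) \<Rightarrow> real) \<Rightarrow> nat \<Rightarrow> (nat \<Rightarrow> real \<Rightarrow> real)
    \<Rightarrow> (mvec \<Rightarrow> mvec) \<Rightarrow> mvec \<Rightarrow> mvec" where
  "mflux A N b \<alpha> u = (\<lambda>l. A (\<lambda>\<mu>. \<mu> * b l \<mu> * mb_ansatz N b (\<alpha> u) \<mu>))"

definition coll :: "((real \<Rightarrow> real) \<Rightarrow> real) \<Rightarrow> (real \<Rightarrow> real \<Rightarrow> real) \<Rightarrow> (real \<Rightarrow> real) \<Rightarrow> real \<Rightarrow> real" where
  "coll A T \<psi> \<mu> = A (\<lambda>\<mu>'. T \<mu> \<mu>' * \<psi> \<mu>') - A (\<lambda>\<mu>'. T \<mu>' \<mu>) * \<psi> \<mu>"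

definition mcoll :: "((real \<Rightarrow> real) \<Rightarrow> real) \<Rightarrow> (real \<Rightarrow> real \<Rightarrow> real) \<Rightarrow> nat
    \<Rightarrow> (nat \<Rightarrow> real \<Rightarrow> real) \<Rightarrow> (mvec \<Rightarrow> mvec) \<Rightarrow> mvec \<Rightarrow> mvec" where
  "mcoll A T N b \<alpha> u = (\<lambda>l. A (\<lambda>\<mu>. b l \<mu> * coll A T (mb_ansatz N b (\<alpha> u)) \<mu>))"

definition num_flux :: "(mvec \<Rightarrow> mvec) \<Rightarrow> mvec \<Rightarrow> mvec \<Rightarrow> mvec" where
  "num_flux F v w = (\<lambda>l. (F v l + F w l - (w l - v l)) / 2)"

definition gauss_lobatto :: "nat \<Rightarrow> (nat \<Rightarrow> real) \<Rightarrow> (nat \<Rightarrow> real) \<Rightarrow> bool" where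
  "gauss_lobatto Q y w \<longleftrightarrow>
     2 \<le> Q \<and> y 1 = -1/2 \<and> y Q = 1/2 \<and> (\<forall>q\<in>{1..<Q}. y q < y (Suc q))
     \<and> (\<forall>q\<in>{1..Q}. 0 < w q) \<and> (\<Sum>q=1..Q. w q) = 1 \<and> w 1 = w Q
     \<and> (\<forall>p::real poly. degree p \<le> 2*Q - 3 \<longrightarrow>
          integral {-1/2..1/2} (poly p) = (\<Sum>q=1..Q. w q * poly p (y q)))"

definition pt_val :: "(nat \<Rightarrow> real poly) \<Rightarrow> real \<Rightarrow> real \<Rightarrow> (nat \<Rightarrow> real) \<Rightarrow> nat \<Rightarrow> mvec" where
  "pt_val p xj dx y q = (\<lambda>l. poly (p l) (xj + y q * dx))"

definition cell_mean :: "(nat \<Rightarrow> real poly) \<Rightarrow> real \<Rightarrow> real \<Rightarrow> mvec" where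
  "cell_mean p xj dx = (\<lambda>l. integral {xj - dx/2 .. xj + dx/2} (poly (p l)) / dx)"

definition dg_mean_update ::
  "((real \<Rightarrow> real) \<Rightarrow> real) \<Rightarrow> (real \<Rightarrow> real \<Rightarrow> real) \<Rightarrow> nat \<Rightarrow> (nat \<Rightarrow> real \<Rightarrow> real)
   \<Rightarrow> (mvec \<Rightarrow> mvec) \<Rightarrow> real \<Rightarrow> real \<Rightarrow> (real \<Rightarrow> real \<Rightarrow> real \<Rightarrow> real) \<Rightarrow> real
   \<Rightarrow> real \<Rightarrow> real \<Rightarrow> real \<Rightarrow> nat \<Rightarrow> (nat \<Rightarrow> real) \<Rightarrow> (nat \<Rightarrow> real)
   \<Rightarrow> (nat \<Rightarrow> real poly) \<Rightarrow> mvec \<Rightarrow> mvec \<Rightarrow> mvec" where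
  "dg_mean_update A T N b \<alpha> \<sigma>a \<sigma>s S tn xj dx dt Q y w p uL uR =
     (\<lambda>l. cell_mean p xj dx l
        - dt / dx * (num_flux (mflux A N b \<alpha>) (pt_val p xj dx y Q) uR l
                     - num_flux (mflux A N b \<alpha>) uL (pt_val p xj dx y 1) l)
        + dt * (\<Sum>q=1..Q. w q * (- \<sigma>a * pt_val p xj dx y q l
                               + \<sigma>s * mcoll A T N b \<alpha> (pt_val p xj dx y q) l
                               + A (\<lambda>\<mu>. b l \<mu> * S tn (xj + y q * dx) \<mu>))))"

end

theory Submission imports Defs begin


lemma GL_mean:
  assumes GL: "gauss_lobatto Q y w" and dx: "0 < dx" and dg: "degree p \<le> 2*Q - 3"
  shows "integral {xj - dx/2 .. xj + dx/2} (poly p) / dx = (\<Sum>q=1..Q. w q * poly p (xj + y q * dx))"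
proof -
  let ?r = "pcompose p [:xj, dx:]"
  have d1: "degree [:xj, dx:] \<le> 1" by simp
  have "degree ?r \<le> degree p * degree [:xj, dx:]" by (rule degree_pcompose_le)
  also have "\<dots> \<le> degree p" using d1 by (metis mult.right_neutral mult_le_mono2)
  finally have degr: "degree ?r \<le> 2*Q - 3" using dg by linarith
  have pr: "poly ?r t = poly p (dx *\<^sub>R t + xj)" for t
    by (simp add: poly_pcompose algebra_simps)
  have "(poly p has_integral integral {xj - dx/2 .. xj + dx/2} (poly p)) (cbox (xj - dx/2) (xj + dx/2))"
    by (auto intro!: integrable_integral integrable_continuous_interval continuous_intros)
  from has_integral_affinity'[OF this dx, of xj]
  have hi: "((\<lambda>t. poly p (dx * t + xj)) has_integral integral {xj - dx/2 .. xj + dx/2} (poly p) / dx) {-1/2..1/2}"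
    using dx by (simp add: field_simps)
  have pr2: "poly ?r = (\<lambda>t. poly p (dx*t+xj))" by (auto simp: poly_pcompose algebra_simps)
  have "integral {-1/2..1/2} (poly ?r) = integral {xj - dx/2 .. xj + dx/2} (poly p) / dx"
    unfolding pr2 using integral_unique[OF hi] .
  moreover have "integral {-1/2..1/2} (poly ?r) = (\<Sum>q=1..Q. w q * poly ?r (y q))"
    using GL degr unfolding gauss_lobatto_def by blast
  ultimately show ?thesis by (simp add: pr algebra_simps)
qed



lemma update_identity:
  fixes A :: "(real \<Rightarrow> real) \<Rightarrow> real" and K :: "(real \<Rightarrow> real) \<Rightarrow> bool"
    and \<psi> G Z :: "nat \<Rightarrow> real \<Rightarrow> real" and \<psi>L \<psi>R :: "real \<Rightarrow> real"
  assumes A_add: "\<And>f g. K f \<Longrightarrow> K g \<Longrightarrow> A (\<lambda>x. f x + g x) = A f + A g"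
    and K_add: "\<And>f g. K f \<Longrightarrow> K g \<Longrightarrow> K (\<lambda>x. f x + g x)"
    and A_mult: "\<And>c f. K f \<Longrightarrow> A (\<lambda>x. c * f x) = c * A f"
    and K_mult: "\<And>c f. K f \<Longrightarrow> K (\<lambda>x. c * f x)"
    and A_sum: "\<And>(F::nat set) f. finite F \<Longrightarrow> (\<And>q. q \<in> F \<Longrightarrow> K (f q)) \<Longrightarrow> A (\<lambda>x. \<Sum>q\<in>F. f q x) = (\<Sum>q\<in>F. A (f q))"
    and K_sum: "\<And>(F::nat set) f. finite F \<Longrightarrow> (\<And>q. q \<in> F \<Longrightarrow> K (f q)) \<Longrightarrow> K (\<lambda>x. \<Sum>q\<in>F. f q x)"
    and Kpsi: "\<And>q. q \<in> {1..Q} \<Longrightarrow> K (\<lambda>\<mu>. b l \<mu> * \<psi> q \<mu>)"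
    and Kpsim: "\<And>q. q \<in> {1..Q} \<Longrightarrow> K (\<lambda>\<mu>. \<mu> * b l \<mu> * \<psi> q \<mu>)"
    and KG: "\<And>q. q \<in> {1..Q} \<Longrightarrow> K (\<lambda>\<mu>. b l \<mu> * G q \<mu>)"
    and KZ: "\<And>q. q \<in> {1..Q} \<Longrightarrow> K (\<lambda>\<mu>. b l \<mu> * S tn (xj + y q * dx) \<mu>)"
    and KL: "K (\<lambda>\<mu>. b l \<mu> * \<psi>L \<mu>)" "K (\<lambda>\<mu>. \<mu> * b l \<mu> * \<psi>L \<mu>)"
    and KR: "K (\<lambda>\<mu>. b l \<mu> * \<psi>R \<mu>)" "K (\<lambda>\<mu>. \<mu> * b l \<mu> * \<psi>R \<mu>)"
    and Q1: "1 \<le> Q"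
    and hu: "\<And>q. q \<in> {1..Q} \<Longrightarrow> pt_val p xj dx y q l = A (\<lambda>\<mu>. b l \<mu> * \<psi> q \<mu>)"
    and hF: "\<And>q. q \<in> {1..Q} \<Longrightarrow> mflux A N b \<alpha> (pt_val p xj dx y q) l = A (\<lambda>\<mu>. \<mu> * b l \<mu> * \<psi> q \<mu>)"
    and huL: "uL l = A (\<lambda>\<mu>. b l \<mu> * \<psi>L \<mu>)" "mflux A N b \<alpha> uL l = A (\<lambda>\<mu>. \<mu> * b l \<mu> * \<psi>L \<mu>)"
    and huR: "uR l = A (\<lambda>\<mu>. b l \<mu> * \<psi>R \<mu>)" "mflux A N b \<alpha> uR l = A (\<lambda>\<mu>. \<mu> * b l \<mu> * \<psi>R \<mu>)"
    and hC: "\<And>q. q \<in> {1..Q} \<Longrightarrow> mcoll A T N b \<alpha> (pt_val p xj dx y q) l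
               = A (\<lambda>\<mu>. b l \<mu> * G q \<mu>) - A (\<lambda>\<mu>. b l \<mu> * \<psi> q \<mu>)"
    and hcm: "cell_mean p xj dx l = (\<Sum>q=1..Q. w q * pt_val p xj dx y q l)"
  shows "dg_mean_update A T N b \<alpha> \<sigma>a \<sigma>s S tn xj dx dt Q y w p uL uR l
    = A (\<lambda>\<mu>. b l \<mu> * ((\<Sum>q=1..Q. w q * ((1 - (\<sigma>a + \<sigma>s) * dt) * \<psi> q \<mu> + dt * \<sigma>s * G q \<mu>
                                + dt * S tn (xj + y q * dx) \<mu>))
          + dt / dx / 2 * (- (1 + \<mu>) * \<psi> Q \<mu> - (1 - \<mu>) * \<psi> 1 \<mu> + (1 - \<mu>) * \<psi>R \<mu> + (1 + \<mu>) * \<psi>L \<mu>)))"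
proof -
  define c where "c = 1 - (\<sigma>a + \<sigma>s) * dt"
  define lam where "lam = dt / dx"
  let ?Z = "\<lambda>q \<mu>. S tn (xj + y q * dx) \<mu>"
  define h where "h = (\<lambda>q \<mu>. (w q * c) * (b l \<mu> * \<psi> q \<mu>)
       + ((w q * dt * \<sigma>s) * (b l \<mu> * G q \<mu>) + (w q * dt) * (b l \<mu> * ?Z q \<mu>)))"
  define k where "k = (\<lambda>\<mu>. (-lam/2) * (b l \<mu> * \<psi> Q \<mu>) + ((-lam/2) * (\<mu> * b l \<mu> * \<psi> Q \<mu>)
      + ((-lam/2) * (b l \<mu> * \<psi> 1 \<mu>) + ((lam/2) * (\<mu> * b l \<mu> * \<psi> 1 \<mu>)
      + ((lam/2) * (b l \<mu> * \<psi>R \<mu>) + ((-lam/2) * (\<mu> * b l \<mu> * \<psi>R \<mu>)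
      + ((lam/2) * (b l \<mu> * \<psi>L \<mu>) + (lam/2) * (\<mu> * b l \<mu> * \<psi>L \<mu>))))))))"
  have QQ: "Q \<in> {1..Q}" "1 \<in> {1..Q}" using Q1 by auto
  have e1: "(\<lambda>\<mu>. b l \<mu> * ((\<Sum>q=1..Q. w q * ((1 - (\<sigma>a + \<sigma>s) * dt) * \<psi> q \<mu> + dt * \<sigma>s * G q \<mu>
                                + dt * S tn (xj + y q * dx) \<mu>))
          + dt / dx / 2 * (- (1 + \<mu>) * \<psi> Q \<mu> - (1 - \<mu>) * \<psi> 1 \<mu> + (1 - \<mu>) * \<psi>R \<mu> + (1 + \<mu>) * \<psi>L \<mu>)))
     = (\<lambda>\<mu>. (\<Sum>q\<in>{1..Q}. h q \<mu>) + k \<mu>)"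
    unfolding h_def k_def c_def lam_def
    by (rule ext) (simp add: sum_distrib_left algebra_simps)
  have Kh: "\<And>q. q \<in> {1..Q} \<Longrightarrow> K (h q)"
    unfolding h_def using Kpsi KG KZ by (auto intro!: K_add K_mult)
  have Kk: "K k" unfolding k_def by (intro K_add K_mult Kpsi Kpsim KL KR QQ)
  have Ah: "\<And>q. q \<in> {1..Q} \<Longrightarrow> A (h q) = (w q * c) * A (\<lambda>\<mu>. b l \<mu> * \<psi> q \<mu>)
      + ((w q * dt * \<sigma>s) * A (\<lambda>\<mu>. b l \<mu> * G q \<mu>) + (w q * dt) * A (\<lambda>\<mu>. b l \<mu> * ?Z q \<mu>))"
    unfolding h_def using Kpsi KG KZ by (simp add: A_add K_add A_mult K_mult)
  have Ak: "A k = (-lam/2) * A (\<lambda>\<mu>. b l \<mu> * \<psi> Q \<mu>) + ((-lam/2) * A (\<lambda>\<mu>. \<mu> * b l \<mu> * \<psi> Q \<mu>)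
      + ((-lam/2) * A (\<lambda>\<mu>. b l \<mu> * \<psi> 1 \<mu>) + ((lam/2) * A (\<lambda>\<mu>. \<mu> * b l \<mu> * \<psi> 1 \<mu>)
      + ((lam/2) * A (\<lambda>\<mu>. b l \<mu> * \<psi>R \<mu>) + ((-lam/2) * A (\<lambda>\<mu>. \<mu> * b l \<mu> * \<psi>R \<mu>)
      + ((lam/2) * A (\<lambda>\<mu>. b l \<mu> * \<psi>L \<mu>) + (lam/2) * A (\<lambda>\<mu>. \<mu> * b l \<mu> * \<psi>L \<mu>)))))))"
    unfolding k_def by (simp only: A_add K_add A_mult K_mult Kpsi[OF QQ(1)] Kpsim[OF QQ(1)] Kpsi[OF QQ(2)] Kpsim[OF QQ(2)] KL KR)
  have rhs: "A (\<lambda>\<mu>. (\<Sum>q\<in>{1..Q}. h q \<mu>) + k \<mu>) = (\<Sum>q\<in>{1..Q}. A (h q)) + A k"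
  proof -
    have "K (\<lambda>\<mu>. \<Sum>q\<in>{1..Q}. h q \<mu>)" by (rule K_sum[of "{1..Q}" h]) (simp_all add: Kh)
    from A_add[OF this Kk] show ?thesis using A_sum[of "{1..Q}" h] Kh by simp
  qed
  have lhs: "dg_mean_update A T N b \<alpha> \<sigma>a \<sigma>s S tn xj dx dt Q y w p uL uR l
     = (\<Sum>q=1..Q. w q * A (\<lambda>\<mu>. b l \<mu> * \<psi> q \<mu>))
       - lam * ((A (\<lambda>\<mu>. \<mu> * b l \<mu> * \<psi> Q \<mu>) + A (\<lambda>\<mu>. \<mu> * b l \<mu> * \<psi>R \<mu>) - (A (\<lambda>\<mu>. b l \<mu> * \<psi>R \<mu>) - A (\<lambda>\<mu>. b l \<mu> * \<psi> Q \<mu>))) / 2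
          - (A (\<lambda>\<mu>. \<mu> * b l \<mu> * \<psi>L \<mu>) + A (\<lambda>\<mu>. \<mu> * b l \<mu> * \<psi> 1 \<mu>) - (A (\<lambda>\<mu>. b l \<mu> * \<psi> 1 \<mu>) - A (\<lambda>\<mu>. b l \<mu> * \<psi>L \<mu>))) / 2)
       + dt * (\<Sum>q=1..Q. w q * (- \<sigma>a * A (\<lambda>\<mu>. b l \<mu> * \<psi> q \<mu>)
            + \<sigma>s * (A (\<lambda>\<mu>. b l \<mu> * G q \<mu>) - A (\<lambda>\<mu>. b l \<mu> * \<psi> q \<mu>))
            + A (\<lambda>\<mu>. b l \<mu> * ?Z q \<mu>)))"
  proof -
    have s1: "(\<Sum>q=1..Q. w q * pt_val p xj dx y q l) = (\<Sum>q=1..Q. w q * A (\<lambda>\<mu>. b l \<mu> * \<psi> q \<mu>))"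
      by (rule sum.cong) (simp_all add: hu)
    have s2: "(\<Sum>q=1..Q. w q * (- \<sigma>a * pt_val p xj dx y q l + \<sigma>s * mcoll A T N b \<alpha> (pt_val p xj dx y q) l
                 + A (\<lambda>\<mu>. b l \<mu> * S tn (xj + y q * dx) \<mu>)))
       = (\<Sum>q=1..Q. w q * (- \<sigma>a * A (\<lambda>\<mu>. b l \<mu> * \<psi> q \<mu>)
            + \<sigma>s * (A (\<lambda>\<mu>. b l \<mu> * G q \<mu>) - A (\<lambda>\<mu>. b l \<mu> * \<psi> q \<mu>))
            + A (\<lambda>\<mu>. b l \<mu> * ?Z q \<mu>)))"
      by (rule sum.cong) (simp_all add: hu hC)
    show ?thesis
      unfolding dg_mean_update_def num_flux_def lam_def hcm s1 s2
      using hu hF huL huR QQ by simp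
  qed
  have fin: "dt * (\<Sum>q=1..Q. w q * (- \<sigma>a * A (\<lambda>\<mu>. b l \<mu> * \<psi> q \<mu>)
            + \<sigma>s * (A (\<lambda>\<mu>. b l \<mu> * G q \<mu>) - A (\<lambda>\<mu>. b l \<mu> * \<psi> q \<mu>))
            + A (\<lambda>\<mu>. b l \<mu> * ?Z q \<mu>))) + (\<Sum>q=1..Q. w q * A (\<lambda>\<mu>. b l \<mu> * \<psi> q \<mu>))
     = (\<Sum>q\<in>{1..Q}. A (h q))"
    unfolding sum_distrib_left sum.distrib[symmetric]
    by (rule sum.cong) (simp_all add: Ah c_def algebra_simps)
  show ?thesis unfolding e1 rhs lhs Ak fin[symmetric] by (simp add: ring_distribs diff_divide_distrib add_divide_distrib; linarith)
qed



lemma phi_lower: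
  fixes \<psi> G Z w :: "nat \<Rightarrow> real"
  assumes Q2: "2 \<le> Q" and wpos: "\<And>q. q \<in> {1..Q} \<Longrightarrow> 0 < w q" and w1: "w 1 = w Q"
    and pos: "\<And>q. q \<in> {1..Q} \<Longrightarrow> 0 \<le> \<psi> q \<and> 0 \<le> G q \<and> 0 \<le> Z q"
    and c: "0 \<le> c" and dt: "0 \<le> dt" and ss: "0 \<le> \<sigma>s" and lam: "0 \<le> lam"
    and L: "0 \<le> \<psi>L" and R: "0 \<le> \<psi>R" and mu: "-1 \<le> \<mu>" "\<mu> \<le> 1"
  shows "(w Q * c - lam) * (\<psi> 1 + \<psi> Q) \<le> (\<Sum>q=1..Q. w q * (c * \<psi> q + dt * \<sigma>s * G q + dt * Z q))
     + lam / 2 * (- (1 + \<mu>) * \<psi> Q - (1 - \<mu>) * \<psi> 1 + (1 - \<mu>) * \<psi>R + (1 + \<mu>) * \<psi>L)"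
proof -
  let ?f = "\<lambda>q. w q * (c * \<psi> q + dt * \<sigma>s * G q + dt * Z q)"
  have nn: "\<And>q. q \<in> {1..Q} \<Longrightarrow> 0 \<le> ?f q"
    using wpos pos c dt ss by (intro mult_nonneg_nonneg add_nonneg_nonneg) (auto simp: less_imp_le)
  have ge: "\<And>q. q \<in> {1..Q} \<Longrightarrow> w q * c * \<psi> q \<le> ?f q"
  proof -
    fix q assume q: "q \<in> {1..Q}"
    have "0 \<le> dt * \<sigma>s * G q + dt * Z q" using pos[OF q] dt ss by simp
    hence "w q * (c * \<psi> q) \<le> w q * (c * \<psi> q + dt * \<sigma>s * G q + dt * Z q)"
      using wpos[OF q] by (intro mult_left_mono) auto
    thus "w q * c * \<psi> q \<le> ?f q" by (simp add: mult.assoc)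
  qed
  have sub: "{1, Q} \<subseteq> {1..Q}" using Q2 by auto
  have "sum ?f {1, Q} \<le> sum ?f {1..Q}"
    by (rule sum_mono2) (use sub nn in auto)
  moreover have "sum ?f {1, Q} = ?f 1 + ?f Q" using Q2 by simp
  moreover have "w 1 * c * \<psi> 1 \<le> ?f 1" "w Q * c * \<psi> Q \<le> ?f Q" using ge Q2 by auto
  moreover have "w 1 * c * \<psi> 1 = w Q * c * \<psi> 1" using w1 by simp
  ultimately have S: "w Q * c * \<psi> 1 + w Q * c * \<psi> Q \<le> (\<Sum>q=1..Q. ?f q)" by linarith
  have p1: "0 \<le> \<psi> 1" "0 \<le> \<psi> Q" using pos Q2 by auto
  have a1: "lam * \<psi> Q * ((1 + \<mu>) / 2) \<le> lam * \<psi> Q * 1"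
    using p1 lam mu by (intro mult_left_mono) auto
  have a2: "lam * \<psi> 1 * ((1 - \<mu>) / 2) \<le> lam * \<psi> 1 * 1"
    using p1 lam mu by (intro mult_left_mono) auto
  have a3: "0 \<le> lam * ((1 - \<mu>) * \<psi>R)" "0 \<le> lam * ((1 + \<mu>) * \<psi>L)"
    using lam mu L R by auto
  have "lam / 2 * (- (1 + \<mu>) * \<psi> Q - (1 - \<mu>) * \<psi> 1 + (1 - \<mu>) * \<psi>R + (1 + \<mu>) * \<psi>L)
     = - (lam * \<psi> Q * ((1 + \<mu>) / 2)) - lam * \<psi> 1 * ((1 - \<mu>) / 2)
        + lam * ((1 - \<mu>) * \<psi>R) / 2 + lam * ((1 + \<mu>) * \<psi>L) / 2"
    by (simp add: field_simps)
  hence "- lam * \<psi> Q - lam * \<psi> 1 \<le> lam / 2 * (- (1 + \<mu>) * \<psi> Q - (1 - \<mu>) * \<psi> 1 + (1 - \<mu>) * \<psi>R + (1 + \<mu>) * \<psi>L)"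
    using a1 a2 a3 by linarith
  with S show ?thesis by (simp add: algebra_simps)
qed



lemma G_meas:
  fixes T :: "real \<Rightarrow> real \<Rightarrow> real" and \<psi> :: "real \<Rightarrow> real"
  assumes T: "(\<lambda>(\<mu>, \<mu>'). T \<mu> \<mu>') \<in> borel_measurable borel" and P: "\<psi> \<in> borel_measurable borel"
  shows "(\<lambda>\<mu>. ang (\<lambda>\<mu>'. T \<mu> \<mu>' * \<psi> \<mu>')) \<in> borel_measurable borel"
proof -
  have T': "(\<lambda>x. T (fst x) (snd x)) \<in> borel_measurable (borel \<Otimes>\<^sub>M borel)"
    using T unfolding borel_prod by (simp add: case_prod_beta')
  have "(\<lambda>x. indicator {-1..1::real} (snd x) *\<^sub>R (T (fst x) (snd x) * \<psi> (snd x)))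
      \<in> borel_measurable (borel \<Otimes>\<^sub>M borel)"
    using T' P by measurable
  hence "(\<lambda>x. indicator {-1..1::real} (snd x) *\<^sub>R (T (fst x) (snd x) * \<psi> (snd x)))
      \<in> borel_measurable (borel \<Otimes>\<^sub>M lborel)"
    by (subst measurable_cong_sets[OF sets_pair_measure_cong[OF refl sets_lborel] refl])
  hence "case_prod (\<lambda>\<mu> \<mu>'. indicator {-1..1::real} \<mu>' *\<^sub>R (T \<mu> \<mu>' * \<psi> \<mu>'))
      \<in> borel_measurable (borel \<Otimes>\<^sub>M lborel)"
    by (simp add: case_prod_beta')
  from lborel.borel_measurable_lebesgue_integral[OF this]
  show ?thesis unfolding ang_def set_lebesgue_integral_def .
qed

definition bmf :: "(real \<Rightarrow> real) \<Rightarrow> bool" where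
  "bmf f \<longleftrightarrow> f \<in> borel_measurable borel \<and> (\<exists>B. \<forall>\<mu>\<in>{-1..1}. \<bar>f \<mu>\<bar> \<le> B)"

lemma bmf_I: "bmf f \<Longrightarrow> set_integrable lborel {-1..1::real} f"
proof -
  assume "bmf f"
  then obtain B where m: "f \<in> borel_measurable borel" and B: "\<forall>\<mu>\<in>{-1..1}. \<bar>f \<mu>\<bar> \<le> B"
    unfolding bmf_def by blast
  show ?thesis unfolding set_integrable_def
    by (rule integrableI_bounded_set_indicator[where B=B]) (use m B in auto)
qed

lemma bmf_add: "bmf f \<Longrightarrow> bmf g \<Longrightarrow> bmf (\<lambda>x. f x + g x)"
  unfolding bmf_def
proof (elim conjE exE, intro conjI)
  fix B C assume "\<forall>\<mu>\<in>{-1..1}. \<bar>f \<mu>\<bar> \<le> B" "\<forall>\<mu>\<in>{-1..1}. \<bar>g \<mu>\<bar> \<le> C"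
  thus "\<exists>B. \<forall>\<mu>\<in>{-1..1}. \<bar>f \<mu> + g \<mu>\<bar> \<le> B"
    by (intro exI[of _ "B + C"]) (auto intro: order.trans[OF abs_triangle_ineq] add_mono)
qed auto

lemma bmf_mult: "bmf f \<Longrightarrow> bmf g \<Longrightarrow> bmf (\<lambda>x. f x * g x)"
  unfolding bmf_def
proof (elim conjE exE, intro conjI)
  fix B C assume "\<forall>\<mu>\<in>{-1..1}. \<bar>f \<mu>\<bar> \<le> B" "\<forall>\<mu>\<in>{-1..1}. \<bar>g \<mu>\<bar> \<le> C"
  note h = this
  have B0: "0 \<le> B" using h(1) by (metis abs_ge_zero atLeastAtMost_iff neg_le_0_iff_le order.trans zero_less_one_class.zero_le_one)
  show "\<exists>B. \<forall>\<mu>\<in>{-1..1}. \<bar>f \<mu> * g \<mu>\<bar> \<le> B"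
  proof (intro exI[of _ "B * C"] ballI)
    fix \<mu> :: real assume "\<mu> \<in> {-1..1}"
    with h have "\<bar>f \<mu>\<bar> \<le> B" "\<bar>g \<mu>\<bar> \<le> C" by auto
    thus "\<bar>f \<mu> * g \<mu>\<bar> \<le> B * C" using B0 by (simp add: abs_mult mult_mono)
  qed
qed auto

lemma bmf_const: "bmf (\<lambda>x. c)"
  unfolding bmf_def by auto

lemma bmf_id: "bmf (\<lambda>x. x)"
  unfolding bmf_def by (auto intro!: exI[of _ 1])

lemma bmf_minus: "bmf f \<Longrightarrow> bmf g \<Longrightarrow> bmf (\<lambda>x. f x - g x)"
  using bmf_add[of f "\<lambda>x. (-1) * g x"] bmf_mult[OF bmf_const, of g "-1"] by simp

lemma bmf_uminus: "bmf f \<Longrightarrow> bmf (\<lambda>x. - f x)"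
  using bmf_mult[OF bmf_const, of f "-1"] by simp

lemma I_mult_bmf:
  assumes I: "set_integrable lborel {-1..1::real} f" and g: "bmf g"
  shows "set_integrable lborel {-1..1::real} (\<lambda>x. g x * f x)"
proof -
  obtain B where B: "\<forall>\<mu>\<in>{-1..1}. \<bar>g \<mu>\<bar> \<le> B" and gm: "g \<in> borel_measurable borel"
    using g unfolding bmf_def by blast
  have fm: "(\<lambda>x. indicator {-1..1::real} x *\<^sub>R f x) \<in> borel_measurable lborel"
    using I unfolding set_integrable_def by (rule borel_measurable_integrable)
  show ?thesis
  proof (rule set_integrable_bound[of _ _ "\<lambda>x. B * f x"])
    show "set_integrable lborel {-1..1} (\<lambda>x. B * f x)" using I by simp
    have "(\<lambda>x. g x * (indicator {-1..1::real} x *\<^sub>R f x)) \<in> borel_measurable lborel"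
      using fm gm by measurable
    thus "set_borel_measurable lborel {-1..1} (\<lambda>x. g x * f x)"
      unfolding set_borel_measurable_def by (simp add: mult.left_commute)
    show "AE x in lborel. x \<in> {-1..1} \<longrightarrow> norm (g x * f x) \<le> norm (B * f x)"
    proof (rule AE_I2, intro impI)
      fix x :: real assume "x \<in> {-1..1}"
      hence "\<bar>g x\<bar> \<le> \<bar>B\<bar>" using B by force
      thus "norm (g x * f x) \<le> norm (B * f x)" by (simp add: abs_mult mult_right_mono)
    qed
  qed
qed

lemma ang_sum:
  fixes f :: "nat \<Rightarrow> real \<Rightarrow> real"
  assumes "finite F" "\<And>q. q \<in> F \<Longrightarrow> set_integrable lborel {-1..1::real} (f q)"
  shows "set_integrable lborel {-1..1::real} (\<lambda>x. \<Sum>q\<in>F. f q x)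
     \<and> ang (\<lambda>x. \<Sum>q\<in>F. f q x) = (\<Sum>q\<in>F. ang (f q))"
  using assms
proof (induction F rule: finite_induct)
  case empty thus ?case by (simp add: ang_def set_integrable_def)
next
  case (insert a F)
  hence IH: "set_integrable lborel {-1..1::real} (\<lambda>x. \<Sum>q\<in>F. f q x)"
    "ang (\<lambda>x. \<Sum>q\<in>F. f q x) = (\<Sum>q\<in>F. ang (f q))" by auto
  have fa: "set_integrable lborel {-1..1::real} (f a)" using insert by auto
  show ?case using insert(1,2) set_integral_add[OF fa IH(1)] IH(2)
    by (simp add: ang_def)
qed

lemma mb_bmf:
  assumes meas: "\<And>l. l \<le> N \<Longrightarrow> b l \<in> borel_measurable borel"
    and bdd: "\<exists>B. \<forall>l\<le>N. \<forall>\<mu>\<in>{-1..1}. \<bar>b l \<mu>\<bar> \<le> B"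
  shows "bmf (mb_ansatz N b a)"
proof -
  obtain B where B: "\<forall>l\<le>N. \<forall>\<mu>\<in>{-1..1}. \<bar>b l \<mu>\<bar> \<le> B" using bdd by blast
  have m: "(\<lambda>\<mu>. \<Sum>l\<le>N. a l * b l \<mu>) \<in> borel_measurable borel"
    using meas by (intro borel_measurable_sum borel_measurable_times) auto
  have bd: "\<bar>\<Sum>l\<le>N. a l * b l \<mu>\<bar> \<le> (\<Sum>l\<le>N. \<bar>a l\<bar> * B)" if "\<mu> \<in> {-1..1}" for \<mu>
  proof -
    have "\<bar>\<Sum>l\<le>N. a l * b l \<mu>\<bar> \<le> (\<Sum>l\<le>N. \<bar>a l * b l \<mu>\<bar>)" by (rule sum_abs)
    also have "\<dots> \<le> (\<Sum>l\<le>N. \<bar>a l\<bar> * B)"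
      using B that by (intro sum_mono) (auto simp: abs_mult intro: mult_left_mono)
    finally show ?thesis .
  qed
  show ?thesis unfolding bmf_def mb_ansatz_def
  proof (intro conjI exI ballI)
    show "(\<lambda>\<mu>. exp (\<Sum>l\<le>N. a l * b l \<mu>)) \<in> borel_measurable borel" using m by measurable
    fix \<mu> :: real assume "\<mu> \<in> {-1..1}"
    with bd have "(\<Sum>l\<le>N. a l * b l \<mu>) \<le> (\<Sum>l\<le>N. \<bar>a l\<bar> * B)" by (meson abs_le_D1)
    thus "\<bar>exp (\<Sum>l\<le>N. a l * b l \<mu>)\<bar> \<le> exp (\<Sum>l\<le>N. \<bar>a l\<bar> * B)" by simp
  qed
qed


lemma G_bmf:
  fixes T :: "real \<Rightarrow> real \<Rightarrow> real" and \<psi> :: "real \<Rightarrow> real"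
  assumes T_meas: "(\<lambda>(\<mu>, \<mu>'). T \<mu> \<mu>') \<in> borel_measurable borel"
    and T_bdd: "\<exists>B. \<forall>\<mu>\<in>{-1..1}. \<forall>\<mu>'\<in>{-1..1}. T \<mu> \<mu>' \<le> B"
    and T_pos: "\<And>\<mu> \<mu>'. \<mu> \<in> {-1..1} \<Longrightarrow> \<mu>' \<in> {-1..1} \<Longrightarrow> 0 < T \<mu> \<mu>'"
    and P: "bmf \<psi>" and Pnn: "\<And>\<mu>. 0 \<le> \<psi> \<mu>"
  shows "bmf (\<lambda>\<mu>. ang (\<lambda>\<mu>'. T \<mu> \<mu>' * \<psi> \<mu>'))"
    and "\<And>\<mu>. \<mu> \<in> {-1..1} \<Longrightarrow> 0 \<le> ang (\<lambda>\<mu>'. T \<mu> \<mu>' * \<psi> \<mu>')"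
proof -
  obtain BT where BT: "\<forall>\<mu>\<in>{-1..1}. \<forall>\<mu>'\<in>{-1..1}. T \<mu> \<mu>' \<le> BT" using T_bdd by blast
  obtain BP where BP: "\<forall>\<mu>\<in>{-1..1}. \<bar>\<psi> \<mu>\<bar> \<le> BP" and Pm: "\<psi> \<in> borel_measurable borel"
    using P unfolding bmf_def by blast
  have Tm: "(\<lambda>\<mu>'. T \<mu> \<mu>') \<in> borel_measurable borel" for \<mu>
  proof -
    have "(\<lambda>\<mu>'. (\<lambda>(a, b). T a b) (\<mu>, \<mu>')) \<in> borel_measurable borel"
      using T_meas by measurable
    thus ?thesis by simp
  qed
  have Tb: "bmf (\<lambda>\<mu>'. T \<mu> \<mu>')" if "\<mu> \<in> {-1..1}" for \<mu>
    unfolding bmf_def using Tm BT T_pos that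
    by (intro conjI exI[of _ BT]) (auto simp: less_imp_le)
  have Ii: "set_integrable lborel {-1..1::real} (\<lambda>\<mu>'. T \<mu> \<mu>' * \<psi> \<mu>')" if "\<mu> \<in> {-1..1}" for \<mu>
    by (rule bmf_I, rule bmf_mult[OF Tb[OF that] P])
  show nn: "0 \<le> ang (\<lambda>\<mu>'. T \<mu> \<mu>' * \<psi> \<mu>')" if "\<mu> \<in> {-1..1}" for \<mu>
    unfolding ang_def set_lebesgue_integral_def
    using T_pos[OF that] Pnn
    by (intro Bochner_Integration.integral_nonneg) (auto simp: indicator_def less_imp_le)
  have up: "ang (\<lambda>\<mu>'. T \<mu> \<mu>' * \<psi> \<mu>') \<le> ang (\<lambda>_. BT * BP)" if "\<mu> \<in> {-1..1}" for \<mu>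
    unfolding ang_def
  proof (rule set_integral_mono[OF Ii[OF that] bmf_I[OF bmf_const]])
    fix x :: real assume x: "x \<in> {-1..1}"
    have "T \<mu> x \<le> BT" using BT that x by auto
    moreover have "\<psi> x \<le> BP" using BP x by force
    moreover have "0 \<le> T \<mu> x" using T_pos[OF that x] by simp
    ultimately show "T \<mu> x * \<psi> x \<le> BT * BP" using Pnn[of x] by (intro mult_mono) auto
  qed
  show "bmf (\<lambda>\<mu>. ang (\<lambda>\<mu>'. T \<mu> \<mu>' * \<psi> \<mu>'))"
    unfolding bmf_def
  proof (intro conjI exI[of _ "ang (\<lambda>_. BT * BP)"] ballI)
    show "(\<lambda>\<mu>. ang (\<lambda>\<mu>'. T \<mu> \<mu>' * \<psi> \<mu>')) \<in> borel_measurable borel"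
      by (rule G_meas[OF T_meas Pm])
    fix \<mu> :: real assume "\<mu> \<in> {-1..1}"
    thus "\<bar>ang (\<lambda>\<mu>'. T \<mu> \<mu>' * \<psi> \<mu>')\<bar> \<le> ang (\<lambda>_. BT * BP)" using nn up by auto
  qed
qed

theorem mainTheorem3:
  fixes N k Q nQ :: nat
    and b :: "nat \<Rightarrow> real \<Rightarrow> real"
    and T :: "real \<Rightarrow> real \<Rightarrow> real"
    and S :: "real \<Rightarrow> real \<Rightarrow> real \<Rightarrow> real"
    and \<sigma>a \<sigma>s tn xj dx dt :: real
    and y w :: "nat \<Rightarrow> real"
    and p :: "nat \<Rightarrow> real poly"
    and uL uR :: mvec
    and \<alpha> \<alpha>Q :: "mvec \<Rightarrow> mvec"
    and mu wt :: "nat \<Rightarrow> real"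
  assumes basis0: "\<And>\<mu>. b 0 \<mu> = 1"
    and basis_meas: "\<And>l. l \<le> N \<Longrightarrow> b l \<in> borel_measurable borel"
    and basis_bdd: "\<exists>B. \<forall>l\<le>N. \<forall>\<mu>\<in>{-1..1}. \<bar>b l \<mu>\<bar> \<le> B"
    and T_meas: "(\<lambda>(\<mu>, \<mu>'). T \<mu> \<mu>') \<in> borel_measurable borel"
    and T_bdd: "\<exists>B. \<forall>\<mu>\<in>{-1..1}. \<forall>\<mu>'\<in>{-1..1}. T \<mu> \<mu>' \<le> B"
    and T_pos: "\<And>\<mu> \<mu>'. \<mu> \<in> {-1..1} \<Longrightarrow> \<mu>' \<in> {-1..1} \<Longrightarrow> 0 < T \<mu> \<mu>'"
    and T_norm: "\<And>\<mu>. \<mu> \<in> {-1..1} \<Longrightarrow> ang (\<lambda>\<mu>'. T \<mu>' \<mu>) = 1"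
    and sig: "0 \<le> \<sigma>a" "0 \<le> \<sigma>s"
    and S_nonneg: "\<And>t x \<mu>. \<mu> \<in> {-1..1} \<Longrightarrow> 0 \<le> S t x \<mu>"
    and dx_pos: "0 < dx" and dt_pos: "0 < dt"
    and GL: "gauss_lobatto Q y w"
    and deg: "k \<le> 2*Q - 3" "\<And>l. l \<le> N \<Longrightarrow> degree (p l) \<le> k"
    and CFL: "dt / dx < w Q * (1 - (\<sigma>a + \<sigma>s) * dt)"
    and quad: "1 \<le> nQ" "\<And>i. i \<in> {1..nQ} \<Longrightarrow> mu i \<in> {-1..1}"
              "\<And>i. i \<in> {1..nQ} \<Longrightarrow> 0 < wt i"
  shows "((is_mb_closure ang (realizable N b) N b \<alpha>
           \<and> (\<forall>q\<in>{1..Q}. set_integrable lborel {-1..1::real} (S tn (xj + y q * dx)))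
           \<and> (\<forall>q\<in>{1..Q}. realizable N b (pt_val p xj dx y q))
           \<and> realizable N b uL \<and> realizable N b uR)
         \<longrightarrow> realizable N b
               (dg_mean_update ang T N b \<alpha> \<sigma>a \<sigma>s S tn xj dx dt Q y w p uL uR))
       \<and> ((is_mb_closure (angQ nQ mu wt) (realizableQ N b nQ mu wt) N b \<alpha>Q
           \<and> (\<forall>i\<in>{1..nQ}. angQ nQ mu wt (\<lambda>\<mu>'. T \<mu>' (mu i)) = 1)
           \<and> (\<forall>q\<in>{1..Q}. realizableQ N b nQ mu wt (pt_val p xj dx y q))
           \<and> realizableQ N b nQ mu wt uL \<and> realizableQ N b nQ mu wt uR)
         \<longrightarrow> realizableQ N b nQ mu wt
               (dg_mean_update (angQ nQ mu wt) T N b \<alpha>Q \<sigma>a \<sigma>s S tn xj dx dt Q y w p uL uR))"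
proof -
  have Q2: "2 \<le> Q" and wpos: "\<And>q. q \<in> {1..Q} \<Longrightarrow> 0 < w q" and w1: "w 1 = w Q"
    using GL unfolding gauss_lobatto_def by auto
  have Q1: "1 \<le> Q" using Q2 by simp
  have wQ: "0 < w Q" using wpos Q1 by auto
  define c where "c = 1 - (\<sigma>a + \<sigma>s) * dt"
  define lam where "lam = dt / dx"
  have lam0: "0 < lam" unfolding lam_def using dx_pos dt_pos by simp
  have CFL': "lam < w Q * c" using CFL unfolding lam_def c_def .
  have c0: "0 < c"
  proof (rule ccontr)
    assume "\<not> 0 < c" hence "w Q * c \<le> 0" using wQ by (simp add: mult_nonneg_nonpos)
    thus False using CFL' lam0 by linarith
  qed
  have eps: "0 < w Q * c - lam" using CFL' by simp
  have hcm: "\<And>l. l \<le> N \<Longrightarrow> cell_mean p xj dx l = (\<Sum>q=1..Q. w q * pt_val p xj dx y q l)"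
  proof -
    fix l assume "l \<le> N"
    hence "degree (p l) \<le> 2*Q - 3" using deg by fastforce
    from GL_mean[OF GL dx_pos this, of xj] show "cell_mean p xj dx l = (\<Sum>q=1..Q. w q * pt_val p xj dx y q l)"
      unfolding cell_mean_def pt_val_def .
  qed
  have mbpos: "\<And>a \<mu>. 0 < mb_ansatz N b a \<mu>" unfolding mb_ansatz_def by simp
  show ?thesis
  proof (rule conjI)
    show "(is_mb_closure ang (realizable N b) N b \<alpha>
           \<and> (\<forall>q\<in>{1..Q}. set_integrable lborel {-1..1::real} (S tn (xj + y q * dx)))
           \<and> (\<forall>q\<in>{1..Q}. realizable N b (pt_val p xj dx y q))
           \<and> realizable N b uL \<and> realizable N b uR)
         \<longrightarrow> realizable N b
               (dg_mean_update ang T N b \<alpha> \<sigma>a \<sigma>s S tn xj dx dt Q y w p uL uR)"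
    proof (intro impI, elim conjE)
      assume clo: "is_mb_closure ang (realizable N b) N b \<alpha>"
        and Sint: "\<forall>q\<in>{1..Q}. set_integrable lborel {-1..1::real} (S tn (xj + y q * dx))"
        and rq: "\<forall>q\<in>{1..Q}. realizable N b (pt_val p xj dx y q)"
        and rL: "realizable N b uL" and rR: "realizable N b uR"
      define \<psi> where "\<psi> = (\<lambda>q. mb_ansatz N b (\<alpha> (pt_val p xj dx y q)))"
      define \<psi>L where "\<psi>L = mb_ansatz N b (\<alpha> uL)"
      define \<psi>R where "\<psi>R = mb_ansatz N b (\<alpha> uR)"
      define G where "G = (\<lambda>q \<mu>. ang (\<lambda>\<mu>'. T \<mu> \<mu>' * \<psi> q \<mu>'))"
      define \<phi> where "\<phi> = (\<lambda>\<mu>. (\<Sum>q=1..Q. w q * (c * \<psi> q \<mu> + dt * \<sigma>s * G q \<mu>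
                                + dt * S tn (xj + y q * dx) \<mu>))
          + lam / 2 * (- (1 + \<mu>) * \<psi> Q \<mu> - (1 - \<mu>) * \<psi> 1 \<mu> + (1 - \<mu>) * \<psi>R \<mu> + (1 + \<mu>) * \<psi>L \<mu>))"
      have bmmb: "\<And>a. bmf (mb_ansatz N b a)" by (rule mb_bmf[OF basis_meas basis_bdd]) auto
      have bmp: "\<And>q. bmf (\<psi> q)" and bmL: "bmf \<psi>L" and bmR: "bmf \<psi>R"
        unfolding \<psi>_def \<psi>L_def \<psi>R_def by (rule bmmb)+
      have pnn: "\<And>q \<mu>. 0 \<le> \<psi> q \<mu>" unfolding \<psi>_def using mbpos less_imp_le by blast
      have bmG: "\<And>q. bmf (G q)" unfolding G_def
        by (rule G_bmf(1)[OF T_meas T_bdd T_pos bmp pnn])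
      have Gnn: "\<And>q \<mu>. \<mu> \<in> {-1..1} \<Longrightarrow> 0 \<le> G q \<mu>" unfolding G_def
        by (rule G_bmf(2)[OF T_meas T_bdd T_pos bmp pnn])
      have bmb: "\<And>l. l \<le> N \<Longrightarrow> bmf (b l)"
        unfolding bmf_def using basis_meas basis_bdd by blast
      have lowb: "\<And>\<mu>. \<mu> \<in> {-1..1} \<Longrightarrow> (w Q * c - lam) * (\<psi> 1 \<mu> + \<psi> Q \<mu>) \<le> \<phi> \<mu>"
      proof -
        fix \<mu> :: real assume i: "\<mu> \<in> {-1..1}"
        have m: "-1 \<le> \<mu>" "\<mu> \<le> 1" using i by auto
        show "(w Q * c - lam) * (\<psi> 1 \<mu> + \<psi> Q \<mu>) \<le> \<phi> \<mu>"
          unfolding \<phi>_def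
          by (rule phi_lower[where \<psi>="\<lambda>q. \<psi> q \<mu>" and G="\<lambda>q. G q \<mu>"
                and Z="\<lambda>q. S tn (xj + y q * dx) \<mu>", OF Q2 wpos w1 _ _ _ _ _ _ _ m])
             (use Gnn[OF i] pnn S_nonneg[OF i] c0 dt_pos sig lam0 in \<open>auto simp: \<psi>L_def \<psi>R_def less_imp_le mbpos\<close>)
      qed
      have pnn1: "\<And>\<mu>. 0 \<le> \<psi> 1 \<mu> + \<psi> Q \<mu>" using pnn by (simp add: add_nonneg_nonneg)
      have phinn: "\<And>\<mu>. \<mu> \<in> {-1..1} \<Longrightarrow> 0 \<le> \<phi> \<mu>"
        using lowb eps pnn1 by (meson less_imp_le mult_nonneg_nonneg order.trans)
      have Iterm: "\<And>q. q \<in> {1..Q} \<Longrightarrow> set_integrable lborel {-1..1::real}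
          (\<lambda>\<mu>. w q * (c * \<psi> q \<mu> + dt * \<sigma>s * G q \<mu> + dt * S tn (xj + y q * dx) \<mu>))"
        using Sint by (intro set_integrable_mult_right set_integral_add(1)) (auto intro: bmf_I bmp bmG)
      have Ibd: "set_integrable lborel {-1..1::real}
          (\<lambda>\<mu>. lam / 2 * (- (1 + \<mu>) * \<psi> Q \<mu> - (1 - \<mu>) * \<psi> 1 \<mu> + (1 - \<mu>) * \<psi>R \<mu> + (1 + \<mu>) * \<psi>L \<mu>))"
        by (intro bmf_I bmf_add bmf_minus bmf_mult bmf_uminus bmf_const bmf_id bmp bmL bmR)
      have Iphi: "set_integrable lborel {-1..1::real} \<phi>"
        unfolding \<phi>_def
        by (rule set_integral_add(1)[OF conjunct1[OF ang_sum] Ibd]) (use Iterm in auto)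
      have angpos: "\<And>q. q \<in> {1..Q} \<Longrightarrow> 0 < ang (\<psi> q)"
      proof -
        fix q assume q: "q \<in> {1..Q}"
        have "ang (\<lambda>\<mu>. b 0 \<mu> * \<psi> q \<mu>) = pt_val p xj dx y q 0"
          using clo rq q unfolding is_mb_closure_def \<psi>_def by blast
        moreover obtain \<phi>' where "ang \<phi>' > 0" "pt_val p xj dx y q 0 = ang (\<lambda>\<mu>. b 0 \<mu> * \<phi>' \<mu>)"
          using rq q unfolding realizable_def by blast
        ultimately show "0 < ang (\<psi> q)" by (simp add: basis0)
      qed
      have Ie: "set_integrable lborel {-1..1::real} (\<lambda>\<mu>. (w Q * c - lam) * (\<psi> 1 \<mu> + \<psi> Q \<mu>))"
        by (intro bmf_I bmf_add bmf_mult bmf_const bmp)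
      have "ang (\<lambda>\<mu>. (w Q * c - lam) * (\<psi> 1 \<mu> + \<psi> Q \<mu>)) \<le> ang \<phi>"
        unfolding ang_def by (rule set_integral_mono[OF Ie Iphi lowb])
      moreover have "ang (\<lambda>\<mu>. (w Q * c - lam) * (\<psi> 1 \<mu> + \<psi> Q \<mu>)) = (w Q * c - lam) * (ang (\<psi> 1) + ang (\<psi> Q))"
        unfolding ang_def using set_integral_add(2)[OF bmf_I[OF bmp] bmf_I[OF bmp]] by simp
      moreover have "0 < (w Q * c - lam) * (ang (\<psi> 1) + ang (\<psi> Q))"
        using eps angpos[of 1] angpos[of Q] Q1 by (intro mult_pos_pos add_pos_pos) auto
      ultimately have angphi: "0 < ang \<phi>" by linarith
      show "realizable N b (dg_mean_update ang T N b \<alpha> \<sigma>a \<sigma>s S tn xj dx dt Q y w p uL uR)"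
        unfolding realizable_def
      proof (intro exI[of _ \<phi>] conjI ballI allI impI)
        show "\<And>\<mu>. \<mu> \<in> {-1..1} \<Longrightarrow> 0 \<le> \<phi> \<mu>" by (rule phinn)
        show "set_integrable lborel {-1..1::real} \<phi>" by (rule Iphi)
        show "\<And>l. l \<le> N \<Longrightarrow> set_integrable lborel {-1..1::real} (\<lambda>\<mu>. b l \<mu> * \<phi> \<mu>)"
          by (rule I_mult_bmf[OF Iphi bmb])
        show "0 < ang \<phi>" by (rule angphi)
      next
        fix l assume l: "l \<le> N"
        have clo': "\<And>u. realizable N b u \<Longrightarrow> ang (\<lambda>\<mu>. b l \<mu> * mb_ansatz N b (\<alpha> u) \<mu>) = u l"
          using clo l unfolding is_mb_closure_def by blast
        have Kp: "\<And>q. set_integrable lborel {-1..1::real} (\<lambda>\<mu>. b l \<mu> * \<psi> q \<mu>)"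
          by (rule bmf_I, rule bmf_mult[OF bmb[OF l] bmp])
        have KG: "\<And>q. set_integrable lborel {-1..1::real} (\<lambda>\<mu>. b l \<mu> * G q \<mu>)"
          by (rule bmf_I, rule bmf_mult[OF bmb[OF l] bmG])
        have hC: "\<And>q. mcoll ang T N b \<alpha> (pt_val p xj dx y q) l
               = ang (\<lambda>\<mu>. b l \<mu> * G q \<mu>) - ang (\<lambda>\<mu>. b l \<mu> * \<psi> q \<mu>)"
        proof -
          fix q
          have "mcoll ang T N b \<alpha> (pt_val p xj dx y q) l = ang (\<lambda>\<mu>. b l \<mu> * coll ang T (\<psi> q) \<mu>)"
            unfolding mcoll_def \<psi>_def ..
          also have "\<dots> = ang (\<lambda>\<mu>. b l \<mu> * G q \<mu> - b l \<mu> * \<psi> q \<mu>)"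
          proof -
            have pw: "\<forall>\<mu>. \<mu> \<in> {-1..1} \<longrightarrow> b l \<mu> * coll ang T (\<psi> q) \<mu> = b l \<mu> * G q \<mu> - b l \<mu> * \<psi> q \<mu>"
              by (auto simp: coll_def G_def T_norm algebra_simps)
            have "set_lebesgue_integral lborel {-1..1::real} (\<lambda>\<mu>. b l \<mu> * coll ang T (\<psi> q) \<mu>)
                = set_lebesgue_integral lborel {-1..1::real} (\<lambda>\<mu>. b l \<mu> * G q \<mu> - b l \<mu> * \<psi> q \<mu>)"
              by (rule set_lebesgue_integral_cong) (use pw in auto)
            thus ?thesis by (simp only: ang_def)
          qed
          also have "\<dots> = ang (\<lambda>\<mu>. b l \<mu> * G q \<mu>) - ang (\<lambda>\<mu>. b l \<mu> * \<psi> q \<mu>)"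
            unfolding ang_def by (rule set_integral_diff(2)[OF KG Kp])
          finally show "?thesis q" .
        qed
        show "dg_mean_update ang T N b \<alpha> \<sigma>a \<sigma>s S tn xj dx dt Q y w p uL uR l = ang (\<lambda>\<mu>. b l \<mu> * \<phi> \<mu>)"
          unfolding \<phi>_def c_def lam_def
        proof (rule update_identity[where K="set_integrable lborel {-1..1::real}" and G=G and \<psi>=\<psi> and \<psi>L=\<psi>L and \<psi>R=\<psi>R])
          show "\<And>f g. set_integrable lborel {-1..1::real} f \<Longrightarrow> set_integrable lborel {-1..1::real} g \<Longrightarrow> ang (\<lambda>x. f x + g x) = ang f + ang g"
            unfolding ang_def by (rule set_integral_add(2))
          show "\<And>(f::real\<Rightarrow>real) g. set_integrable lborel {-1..1::real} f \<Longrightarrow> set_integrable lborel {-1..1::real} g \<Longrightarrow> set_integrable lborel {-1..1::real} (\<lambda>x. f x + g x)"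
            by (rule set_integral_add(1))
          show "\<And>c f. set_integrable lborel {-1..1::real} f \<Longrightarrow> ang (\<lambda>x. c * f x) = c * ang f"
            unfolding ang_def by simp
          show "\<And>c (f::real\<Rightarrow>real). set_integrable lborel {-1..1::real} f \<Longrightarrow> set_integrable lborel {-1..1::real} (\<lambda>x. c * f x)"
            by simp
          show "\<And>(F::nat set) f. finite F \<Longrightarrow> (\<And>q. q \<in> F \<Longrightarrow> set_integrable lborel {-1..1::real} (f q)) \<Longrightarrow> ang (\<lambda>x. \<Sum>q\<in>F. f q x) = (\<Sum>q\<in>F. ang (f q))"
            using ang_sum by blast
          show "\<And>(F::nat set) f. finite F \<Longrightarrow> (\<And>q. q \<in> F \<Longrightarrow> set_integrable lborel {-1..1::real} (f q)) \<Longrightarrow> set_integrable lborel {-1..1::real} (\<lambda>x. \<Sum>q\<in>F. (f q x :: real))"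
            using ang_sum by blast
          show "\<And>q. set_integrable lborel {-1..1::real} (\<lambda>\<mu>. \<mu> * b l \<mu> * \<psi> q \<mu>)"
            by (rule bmf_I, intro bmf_mult bmf_id bmb[OF l] bmp)
          show "\<And>q. q \<in> {1..Q} \<Longrightarrow> set_integrable lborel {-1..1::real} (\<lambda>\<mu>. b l \<mu> * S tn (xj + y q * dx) \<mu>)"
            using Sint I_mult_bmf[OF _ bmb[OF l]] by blast
          show "set_integrable lborel {-1..1::real} (\<lambda>\<mu>. b l \<mu> * \<psi>L \<mu>)" "set_integrable lborel {-1..1::real} (\<lambda>\<mu>. \<mu> * b l \<mu> * \<psi>L \<mu>)"
               "set_integrable lborel {-1..1::real} (\<lambda>\<mu>. b l \<mu> * \<psi>R \<mu>)" "set_integrable lborel {-1..1::real} (\<lambda>\<mu>. \<mu> * b l \<mu> * \<psi>R \<mu>)"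
            by (rule bmf_I, intro bmf_mult bmf_id bmb[OF l] bmL bmR)+
          show "\<And>q. q \<in> {1..Q} \<Longrightarrow> pt_val p xj dx y q l = ang (\<lambda>\<mu>. b l \<mu> * \<psi> q \<mu>)"
            using clo' rq unfolding \<psi>_def by simp
          show "uL l = ang (\<lambda>\<mu>. b l \<mu> * \<psi>L \<mu>)" using clo' rL unfolding \<psi>L_def by simp
          show "uR l = ang (\<lambda>\<mu>. b l \<mu> * \<psi>R \<mu>)" using clo' rR unfolding \<psi>R_def by simp
        qed (use Q1 Kp KG in \<open>auto simp: hC hcm[OF l] mflux_def \<psi>_def \<psi>L_def \<psi>R_def\<close>)
      qed
    qed
  next
    show "(is_mb_closure (angQ nQ mu wt) (realizableQ N b nQ mu wt) N b \<alpha>Q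
           \<and> (\<forall>i\<in>{1..nQ}. angQ nQ mu wt (\<lambda>\<mu>'. T \<mu>' (mu i)) = 1)
           \<and> (\<forall>q\<in>{1..Q}. realizableQ N b nQ mu wt (pt_val p xj dx y q))
           \<and> realizableQ N b nQ mu wt uL \<and> realizableQ N b nQ mu wt uR)
         \<longrightarrow> realizableQ N b nQ mu wt
               (dg_mean_update (angQ nQ mu wt) T N b \<alpha>Q \<sigma>a \<sigma>s S tn xj dx dt Q y w p uL uR)"
    proof (intro impI, elim conjE)
      assume clo: "is_mb_closure (angQ nQ mu wt) (realizableQ N b nQ mu wt) N b \<alpha>Q"
        and Tn: "\<forall>i\<in>{1..nQ}. angQ nQ mu wt (\<lambda>\<mu>'. T \<mu>' (mu i)) = 1"
        and rq: "\<forall>q\<in>{1..Q}. realizableQ N b nQ mu wt (pt_val p xj dx y q)"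
        and rL: "realizableQ N b nQ mu wt uL" and rR: "realizableQ N b nQ mu wt uR"
      let ?A = "angQ nQ mu wt"
      define \<psi> where "\<psi> = (\<lambda>q. mb_ansatz N b (\<alpha>Q (pt_val p xj dx y q)))"
      define \<psi>L where "\<psi>L = mb_ansatz N b (\<alpha>Q uL)"
      define \<psi>R where "\<psi>R = mb_ansatz N b (\<alpha>Q uR)"
      define G where "G = (\<lambda>q \<mu>. ?A (\<lambda>\<mu>'. T \<mu> \<mu>' * \<psi> q \<mu>'))"
      define \<phi> where "\<phi> = (\<lambda>\<mu>. (\<Sum>q=1..Q. w q * (c * \<psi> q \<mu> + dt * \<sigma>s * G q \<mu>
                                + dt * S tn (xj + y q * dx) \<mu>))
          + lam / 2 * (- (1 + \<mu>) * \<psi> Q \<mu> - (1 - \<mu>) * \<psi> 1 \<mu> + (1 - \<mu>) * \<psi>R \<mu> + (1 + \<mu>) * \<psi>L \<mu>))"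
      have Gnn: "\<And>q i. i \<in> {1..nQ} \<Longrightarrow> 0 \<le> G q (mu i)"
        unfolding G_def angQ_def \<psi>_def using quad T_pos mbpos
        by (auto intro!: sum_nonneg mult_nonneg_nonneg simp: less_imp_le)
      have fpos: "\<And>i. i \<in> {1..nQ} \<Longrightarrow> 0 < \<phi> (mu i)"
      proof -
        fix i assume i: "i \<in> {1..nQ}"
        have m: "-1 \<le> mu i" "mu i \<le> 1" using quad(2)[OF i] by auto
        have "(w Q * c - lam) * (\<psi> 1 (mu i) + \<psi> Q (mu i)) \<le> \<phi> (mu i)"
          unfolding \<phi>_def
          by (rule phi_lower[where \<psi>="\<lambda>q. \<psi> q (mu i)" and G="\<lambda>q. G q (mu i)"
                and Z="\<lambda>q. S tn (xj + y q * dx) (mu i)", OF Q2 wpos w1 _ _ _ _ _ _ _ m])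
             (use Gnn[OF i] mbpos S_nonneg quad(2)[OF i] c0 dt_pos sig lam0 in \<open>auto simp: \<psi>_def \<psi>L_def \<psi>R_def less_imp_le\<close>)
        moreover have "0 < (w Q * c - lam) * (\<psi> 1 (mu i) + \<psi> Q (mu i))"
          using eps mbpos unfolding \<psi>_def by (intro mult_pos_pos add_pos_pos) auto
        ultimately show "0 < \<phi> (mu i)" by linarith
      qed
      show "realizableQ N b nQ mu wt
               (dg_mean_update (angQ nQ mu wt) T N b \<alpha>Q \<sigma>a \<sigma>s S tn xj dx dt Q y w p uL uR)"
        unfolding realizableQ_def
      proof (intro exI[of _ "\<lambda>i. \<phi> (mu i)"] conjI ballI allI impI)
        fix i assume "i \<in> {1..nQ}" thus "0 < \<phi> (mu i)" by (rule fpos)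
      next
        fix l assume l: "l \<le> N"
        have clo': "\<And>u. realizableQ N b nQ mu wt u \<Longrightarrow> ?A (\<lambda>\<mu>. b l \<mu> * mb_ansatz N b (\<alpha>Q u) \<mu>) = u l"
          using clo l unfolding is_mb_closure_def by blast
        have hC: "\<And>q. mcoll ?A T N b \<alpha>Q (pt_val p xj dx y q) l
               = ?A (\<lambda>\<mu>. b l \<mu> * G q \<mu>) - ?A (\<lambda>\<mu>. b l \<mu> * \<psi> q \<mu>)"
        proof -
          fix q
          have "\<And>i. i \<in> {1..nQ} \<Longrightarrow> wt i * (b l (mu i) * coll ?A T (\<psi> q) (mu i))
               = wt i * (b l (mu i) * G q (mu i)) - wt i * (b l (mu i) * \<psi> q (mu i))"
            using Tn unfolding coll_def G_def by (simp add: algebra_simps)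
          hence "(\<Sum>i=1..nQ. wt i * (b l (mu i) * coll ?A T (\<psi> q) (mu i)))
                = (\<Sum>i=1..nQ. wt i * (b l (mu i) * G q (mu i)) - wt i * (b l (mu i) * \<psi> q (mu i)))"
            by (rule sum.cong[OF refl])
          thus "?thesis q" unfolding mcoll_def
            by (simp add: angQ_def sum_subtractf \<psi>_def)
        qed
        have "dg_mean_update ?A T N b \<alpha>Q \<sigma>a \<sigma>s S tn xj dx dt Q y w p uL uR l = ?A (\<lambda>\<mu>. b l \<mu> * \<phi> \<mu>)"
          unfolding \<phi>_def c_def lam_def
        proof (rule update_identity[where K="\<lambda>_. True" and G=G and \<psi>=\<psi> and \<psi>L=\<psi>L and \<psi>R=\<psi>R])
          show "\<And>f g. ?A (\<lambda>x. f x + g x) = ?A f + ?A g"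
            by (simp add: angQ_def distrib_left sum.distrib)
          show "\<And>c f. ?A (\<lambda>x. c * f x) = c * ?A f"
            by (simp add: angQ_def sum_distrib_left mult.left_commute)
          show "\<And>(F::nat set) f. finite F \<Longrightarrow> ?A (\<lambda>x. \<Sum>q\<in>F. f q x) = (\<Sum>q\<in>F. ?A (f q))"
            unfolding angQ_def sum_distrib_left by (rule sum.swap)
          show "\<And>q. q \<in> {1..Q} \<Longrightarrow> pt_val p xj dx y q l = ?A (\<lambda>\<mu>. b l \<mu> * \<psi> q \<mu>)"
            using clo' rq unfolding \<psi>_def by simp
          show "uL l = ?A (\<lambda>\<mu>. b l \<mu> * \<psi>L \<mu>)" using clo' rL unfolding \<psi>L_def by simp
          show "uR l = ?A (\<lambda>\<mu>. b l \<mu> * \<psi>R \<mu>)" using clo' rR unfolding \<psi>R_def by simp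
        qed (use Q1 in \<open>auto simp: hC hcm[OF l] mflux_def \<psi>_def \<psi>L_def \<psi>R_def\<close>)
        also have "\<dots> = (\<Sum>i=1..nQ. wt i * b l (mu i) * \<phi> (mu i))"
          by (simp add: angQ_def mult.assoc)
        finally show "dg_mean_update ?A T N b \<alpha>Q \<sigma>a \<sigma>s S tn xj dx dt Q y w p uL uR l
            = (\<Sum>i=1..nQ. wt i * b l (mu i) * \<phi> (mu i))" .
      qed
    qed
  qed
qed

end
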